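(* Let $X$ be a Banach lattice with order continuous norm and let $(S_\lambda)_{\lambda\in\Lambda}$ be a family of convex monotone semigroups on $X$ such that $\{S_\lambda(t)x:\lambda\in\Lambda\}$ is bounded above for all $x\in X$ and $t>0$. Assume that for every $t\ge 0$ there is a bounded operator $C(t)\colon X\to X$ with $J_\pi x\le C(t)x$ for all $\pi\in P_t$ and $x\in X$. Then the semigroup envelope $S=(S(t))_{t\ge0}$ of $(S_\lambda)_{\lambda\in\Lambda}$ exists, is a convex monotone semigroup, and is given by $S(t)x=\sup_{\pi\in P_t}J_\pi x$ for all $t\ge0$, $x\in X$. If moreover $C(t)x\to x$ as $t\downarrow 0$ for all $x\in X$ and $S_{\lambda_0}$ is a $C_0$-semigroup for some $\lambda_0\in\Lambda$, then $S$ is a $C_0$-semigroup. Moreover, if $S_\lambda$ is sublinear for all $\lambda\in\Lambda$, then $S$ is sublinear.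
   Context: A Banach lattice $X$ has order continuous norm if $\|x_\alpha\|\to 0$ for every net $x_\alpha\downarrow 0$ (then every nonempty subset bounded above has a supremum). An operator $T\colon X\to X$ is convex if $T(\lambda x+(1-\lambda)y)\le\lambda Tx+(1-\lambda)Ty$, monotone if $x\le y\Rightarrow Tx\le Ty$, positive homogeneous if $T(\lambda x)=\lambda Tx$ for $\lambda>0$, sublinear if convex and positive homogeneous, bounded if $\sup_{\|x\|\le r}\|Tx\|<\infty$ for all $r>0$. A semigroup on $X$ is a family $(S(t))_{t\ge0}$ of bounded operators $X\to X$ with $S(0)=\mathrm{id}$ and $S(t+s)=S(t)S(s)$; it is a $C_0$-semigroup if additionally $S(t)x\to x$ as $t\downarrow0$ for all $x$; it is convex/monotone/sublinear if every $S(t)$ is. For semigroups $S,T$ write $S\le T$ if $S(t)x\le T(t)x$ for all $t,x$. A semigroup $S$ is an upper bound of $(S_\lambda)$ if $S\ge S_\lambda$ for all $\lambda$, and the (upper) semigroup envelope is the smallest upper bound. Let $P$ be the set of finite sets $\pi\subset[0,\infty)$ with $0\in\pi$, and $P_t:=\{\pi\in P:\max\pi=t\}$. Define $J_hx:=\sup_{\lambda\in\Lambda}S_\lambda(h)x$ for $h>0$ (and $J_0=\mathrm{id}$), and for $\pi=\{t_0,\dots,t_m\}$ with $0=t_0<t_1<\dots<t_m$, $J_\pi x:=J_{t_1-t_0}\cdots J_{t_m-t_{m-1}}x$ ($J_{\{0\}}=\mathrm{id}$). *)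

theory Defs
  imports "HOL-Analysis.Analysis"
begin

definition lat_abs :: "'a::{ordered_real_vector, lattice} \<Rightarrow> 'a" where
  "lat_abs x = sup x (- x)"

definition banach_lattice :: "'a::{banach, ordered_real_vector, lattice} itself \<Rightarrow> bool" where
  "banach_lattice _ \<longleftrightarrow> (\<forall>x y::'a. lat_abs x \<le> lat_abs y \<longrightarrow> norm x \<le> norm y)"

definition is_lub :: "'a::order \<Rightarrow> 'a set \<Rightarrow> bool" where
  "is_lub s A \<longleftrightarrow> (\<forall>a\<in>A. a \<le> s) \<and> (\<forall>u. (\<forall>a\<in>A. a \<le> u) \<longrightarrow> s \<le> u)"

definition lub_of :: "'a::order set \<Rightarrow> 'a" where
  "lub_of A = (THE s. is_lub s A)"

(* A decreasing net x_alpha \<down> 0: its index set D \<subseteq> X is downward directed,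
   indexed by itself with the reversed order; infimum 0. Convergence along the net
   is convergence along the filter of tails {y \<in> D. y \<le> d}. *)
definition net_down_to_zero :: "'a::{ordered_real_vector, lattice} set \<Rightarrow> bool" where
  "net_down_to_zero D \<longleftrightarrow> D \<noteq> {} \<and> (\<forall>x\<in>D. \<forall>y\<in>D. \<exists>z\<in>D. z \<le> x \<and> z \<le> y) \<and>
     (\<forall>x\<in>D. 0 \<le> x) \<and> (\<forall>u. (\<forall>x\<in>D. u \<le> x) \<longrightarrow> u \<le> 0)"

definition tails_filter :: "'a::order set \<Rightarrow> 'a filter" where
  "tails_filter D = (INF d\<in>D. principal {y\<in>D. y \<le> d})"

definition order_continuous_norm :: "'a::{banach, ordered_real_vector, lattice} itself \<Rightarrow> bool" where
  "order_continuous_norm _ \<longleftrightarrow>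
     (\<forall>D::'a set. net_down_to_zero D \<longrightarrow> ((\<lambda>x. norm x) \<longlongrightarrow> 0) (tails_filter D))"

definition bounded_op :: "('a::real_normed_vector \<Rightarrow> 'a) \<Rightarrow> bool" where
  "bounded_op T \<longleftrightarrow> (\<forall>r>0. \<exists>M. \<forall>x. norm x \<le> r \<longrightarrow> norm (T x) \<le> M)"

definition convex_op :: "('a::ordered_real_vector \<Rightarrow> 'a) \<Rightarrow> bool" where
  "convex_op T \<longleftrightarrow> (\<forall>x y. \<forall>\<mu>::real. 0 \<le> \<mu> \<and> \<mu> \<le> 1 \<longrightarrow>
      T (\<mu> *\<^sub>R x + (1 - \<mu>) *\<^sub>R y) \<le> \<mu> *\<^sub>R T x + (1 - \<mu>) *\<^sub>R T y)"

definition monotone_op :: "('a::order \<Rightarrow> 'a) \<Rightarrow> bool" where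
  "monotone_op T \<longleftrightarrow> (\<forall>x y. x \<le> y \<longrightarrow> T x \<le> T y)"

definition pos_homogeneous_op :: "('a::real_vector \<Rightarrow> 'a) \<Rightarrow> bool" where
  "pos_homogeneous_op T \<longleftrightarrow> (\<forall>\<mu>::real>0. \<forall>x. T (\<mu> *\<^sub>R x) = \<mu> *\<^sub>R T x)"

definition sublinear_op :: "('a::ordered_real_vector \<Rightarrow> 'a) \<Rightarrow> bool" where
  "sublinear_op T \<longleftrightarrow> convex_op T \<and> pos_homogeneous_op T"

(* semigroups: families S t indexed by t \<ge> 0 (values at t < 0 are irrelevant) *)
definition semigroup :: "(real \<Rightarrow> 'a::real_normed_vector \<Rightarrow> 'a) \<Rightarrow> bool" where
  "semigroup S \<longleftrightarrow> (\<forall>t\<ge>0. bounded_op (S t)) \<and> S 0 = id \<and>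
     (\<forall>t\<ge>0. \<forall>s\<ge>0. S (t + s) = S t \<circ> S s)"

definition C0_semigroup :: "(real \<Rightarrow> 'a::real_normed_vector \<Rightarrow> 'a) \<Rightarrow> bool" where
  "C0_semigroup S \<longleftrightarrow> semigroup S \<and> (\<forall>x. ((\<lambda>t. S t x) \<longlongrightarrow> x) (at_right 0))"

definition convex_sg :: "(real \<Rightarrow> 'a::{real_normed_vector, ordered_real_vector} \<Rightarrow> 'a) \<Rightarrow> bool" where
  "convex_sg S \<longleftrightarrow> (\<forall>t\<ge>0. convex_op (S t))"

definition monotone_sg :: "(real \<Rightarrow> 'a::{real_normed_vector, order} \<Rightarrow> 'a) \<Rightarrow> bool" where
  "monotone_sg S \<longleftrightarrow> (\<forall>t\<ge>0. monotone_op (S t))"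

definition sublinear_sg :: "(real \<Rightarrow> 'a::{real_normed_vector, ordered_real_vector} \<Rightarrow> 'a) \<Rightarrow> bool" where
  "sublinear_sg S \<longleftrightarrow> (\<forall>t\<ge>0. sublinear_op (S t))"

definition sg_le :: "(real \<Rightarrow> 'a::order \<Rightarrow> 'a) \<Rightarrow> (real \<Rightarrow> 'a \<Rightarrow> 'a) \<Rightarrow> bool" where
  "sg_le S T \<longleftrightarrow> (\<forall>t\<ge>0. \<forall>x. S t x \<le> T t x)"

definition is_upper_bound_sg ::
  "('l \<Rightarrow> real \<Rightarrow> 'a::{real_normed_vector, order} \<Rightarrow> 'a) \<Rightarrow> 'l set \<Rightarrow> (real \<Rightarrow> 'a \<Rightarrow> 'a) \<Rightarrow> bool" where
  "is_upper_bound_sg F Lam S \<longleftrightarrow> semigroup S \<and> (\<forall>l\<in>Lam. sg_le (F l) S)"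

definition is_envelope ::
  "('l \<Rightarrow> real \<Rightarrow> 'a::{real_normed_vector, order} \<Rightarrow> 'a) \<Rightarrow> 'l set \<Rightarrow> (real \<Rightarrow> 'a \<Rightarrow> 'a) \<Rightarrow> bool" where
  "is_envelope F Lam S \<longleftrightarrow> is_upper_bound_sg F Lam S \<and>
     (\<forall>T. is_upper_bound_sg F Lam T \<longrightarrow> sg_le S T)"

definition partitions :: "real \<Rightarrow> real set set" where
  "partitions t = {\<pi>. finite \<pi> \<and> \<pi> \<subseteq> {0..} \<and> 0 \<in> \<pi> \<and> Max \<pi> = t}"

definition J_op :: "('l \<Rightarrow> real \<Rightarrow> 'a::order \<Rightarrow> 'a) \<Rightarrow> 'l set \<Rightarrow> real \<Rightarrow> 'a \<Rightarrow> 'a" where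
  "J_op F Lam h x = (if h = 0 then x else lub_of {F l h x | l. l \<in> Lam})"

fun J_list :: "(real \<Rightarrow> 'a \<Rightarrow> 'a) \<Rightarrow> real list \<Rightarrow> 'a \<Rightarrow> 'a" where
  "J_list J (a # b # rest) x = J (b - a) (J_list J (b # rest) x)"
| "J_list J _ x = x"

definition J_part :: "('l \<Rightarrow> real \<Rightarrow> 'a::order \<Rightarrow> 'a) \<Rightarrow> 'l set \<Rightarrow> real set \<Rightarrow> 'a \<Rightarrow> 'a" where
  "J_part F Lam \<pi> x = J_list (J_op F Lam) (sorted_list_of_set \<pi>) x"

end

theory Submission
  imports Defs
begin

lemma lat_abs_nonneg: "0 \<le> (a::'a::{ordered_real_vector, lattice}) \<Longrightarrow> lat_abs a = a"
  unfolding lat_abs_def by (rule sup_absorb1) (meson neg_le_0_iff_le order_trans)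

lemma lat_abs_ge0: "0 \<le> lat_abs (w::'a::{ordered_real_vector, lattice})"
proof -
  let ?q = "sup w (- w)"
  have "w \<le> ?q" "- w \<le> ?q" by auto
  hence "w + - w \<le> ?q + ?q" by (rule add_mono)
  hence "0 \<le> ?q + ?q" by simp
  hence "0 \<le> (1/2::real) *\<^sub>R (?q + ?q)" by (intro scaleR_nonneg_nonneg) simp_all
  also have "?q + ?q = (2::real) *\<^sub>R ?q" by (simp add: scaleR_2)
  also have "(1/2::real) *\<^sub>R ((2::real) *\<^sub>R ?q) = ?q" by simp
  finally show ?thesis unfolding lat_abs_def .
qed

lemma norm_mono_nonneg:
  fixes a b :: "'a::{banach, ordered_real_vector, lattice}"
  assumes BL: "banach_lattice TYPE('a)" and "0 \<le> a" "a \<le> b"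
  shows "norm a \<le> norm b"
proof -
  have "0 \<le> b" using assms order_trans by blast
  then show ?thesis using BL assms unfolding banach_lattice_def
    by (metis lat_abs_nonneg)
qed

lemma norm_sup0:
  fixes w :: "'a::{banach, ordered_real_vector, lattice}"
  assumes BL: "banach_lattice TYPE('a)"
  shows "norm (sup w 0) \<le> norm w"
proof -
  have "lat_abs (sup w 0) = sup w 0" by (rule lat_abs_nonneg) simp
  also have "\<dots> \<le> lat_abs w" using lat_abs_ge0[of w] unfolding lat_abs_def by auto
  finally show ?thesis using BL unfolding banach_lattice_def by blast
qed

lemma closed_cone:
  fixes v :: "'a::{banach, ordered_real_vector, lattice}"
  assumes BL: "banach_lattice TYPE('a)"
    and H: "\<And>e. e > 0 \<Longrightarrow> \<exists>w. v \<le> w \<and> norm w < e"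
  shows "v \<le> 0"
proof -
  have "norm (sup v 0) \<le> e" if e0: "e > 0" for e
  proof -
    obtain w where w: "v \<le> w" "norm w < e" using H[OF e0] by blast
    have "norm (sup v 0) \<le> norm (sup w 0)"
      by (rule norm_mono_nonneg[OF BL]) (auto intro: sup.coboundedI1 w)
    also have "\<dots> \<le> norm w" by (rule norm_sup0[OF BL])
    finally show ?thesis using w by simp
  qed
  hence "norm (sup v 0) \<le> 0" by (meson dense not_le)
  hence "sup v 0 = 0" by simp
  thus ?thesis by (metis sup.cobounded1)
qed

lemma sandwich_norm:
  fixes a b c :: "'a::{banach, ordered_real_vector, lattice}"
  assumes BL: "banach_lattice TYPE('a)" and "a \<le> b" "b \<le> c"
  shows "norm (b - a) \<le> norm (c - a)"
  using norm_mono_nonneg[OF BL, of "b - a" "c - a"] assms by simp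

lemma is_lub_unique: "is_lub s A \<Longrightarrow> is_lub s' A \<Longrightarrow> s = (s'::'a::order)"
  unfolding is_lub_def by (meson order.antisym)

lemma lub_of_eq: "is_lub s A \<Longrightarrow> lub_of A = s"
  unfolding lub_of_def using is_lub_unique by blast

definition updir :: "'a::order set \<Rightarrow> bool" where
  "updir A \<longleftrightarrow> (\<forall>a\<in>A. \<forall>b\<in>A. \<exists>c\<in>A. a \<le> c \<and> b \<le> c)"

lemma OC_tail:
  fixes D :: "'a::{banach, ordered_real_vector, lattice} set"
  assumes OC: "order_continuous_norm TYPE('a)" and D: "net_down_to_zero D" and e: "e > 0"
  shows "\<exists>d\<in>D. \<forall>y\<in>D. y \<le> d \<longrightarrow> norm y < e"
proof -
  have "((\<lambda>x. norm x) \<longlongrightarrow> 0) (tails_filter D)" using OC D unfolding order_continuous_norm_def by blast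
  hence ev: "eventually (\<lambda>x. norm x < e) (tails_filter D)" using e by (rule order_tendstoD(2))
  have ne: "D \<noteq> {}" and dir: "\<forall>x\<in>D. \<forall>y\<in>D. \<exists>z\<in>D. z \<le> x \<and> z \<le> y"
    using D unfolding net_down_to_zero_def by auto
  have "eventually (\<lambda>x. norm x < e) (INF d\<in>D. principal {y\<in>D. y \<le> d}) \<longleftrightarrow>
     (\<exists>d\<in>D. eventually (\<lambda>x. norm x < e) (principal {y\<in>D. y \<le> d}))"
  proof (rule eventually_INF_base[OF ne])
    fix a b assume "a \<in> D" "b \<in> D"
    then obtain z where z: "z \<in> D" "z \<le> a" "z \<le> b" using dir by blast
    show "\<exists>x\<in>D. principal {y \<in> D. y \<le> x} \<le> inf (principal {y \<in> D. y \<le> a}) (principal {y \<in> D. y \<le> b})"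
      using z by (intro bexI[of _ z]) (auto simp: inf_principal intro: order_trans)
  qed
  with ev show ?thesis unfolding tails_filter_def eventually_principal by auto
qed

lemma arch1: "\<exists>n::nat. c < real n + 1"
proof -
  obtain n :: nat where "c < real n" using reals_Archimedean2 by blast
  then show ?thesis by (intro exI[of _ n]) simp
qed

lemma finite_ub:
  assumes "updir A" "A \<noteq> {}" "finite B" "B \<subseteq> A"
  shows "\<exists>c\<in>A. \<forall>b\<in>B. b \<le> c"
  using assms(3,4)
proof (induction B rule: finite_induct)
  case empty then show ?case using assms(2) by auto
next
  case (insert x F)
  then obtain c where "c \<in> A" "\<forall>b\<in>F. b \<le> c" by auto
  moreover obtain d where "d \<in> A" "x \<le> d" "c \<le> d" using assms(1) insert \<open>c \<in> A\<close> unfolding updir_def by blast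
  ultimately show ?case by (intro bexI[of _ d]) (auto intro: order_trans)
qed

lemma dedekind_dir:
  fixes A :: "'a::{banach, ordered_real_vector, lattice} set"
  assumes BL: "banach_lattice TYPE('a)" and OC: "order_continuous_norm TYPE('a)"
    and ne: "A \<noteq> {}" and dir: "updir A" and bd: "\<exists>u. \<forall>a\<in>A. a \<le> u"
  shows "\<exists>s. is_lub s A"
proof -
  define U where "U = {y. \<forall>a\<in>A. a \<le> y}"
  define E where "E = {y - a | y a. y \<in> U \<and> a \<in> A}"
  obtain a0 where a0: "a0 \<in> A" using ne by blast
  obtain y0 where y0: "y0 \<in> U" using bd U_def by blast
  have netE: "net_down_to_zero E"
    unfolding net_down_to_zero_def
  proof (intro conjI ballI allI impI)
    show "E \<noteq> {}" using a0 y0 E_def by blast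
  next
    fix x y assume "x \<in> E" "y \<in> E"
    then obtain y1 a1 y2 a2 where h: "x = y1 - a1" "y = y2 - a2" "y1 \<in> U" "a1 \<in> A" "y2 \<in> U" "a2 \<in> A"
      unfolding E_def by blast
    obtain c where c: "c \<in> A" "a1 \<le> c" "a2 \<le> c" using dir h unfolding updir_def by blast
    have "inf y1 y2 \<in> U" using h unfolding U_def by auto
    hence "inf y1 y2 - c \<in> E" using c E_def by blast
    moreover have "inf y1 y2 - c \<le> x" "inf y1 y2 - c \<le> y" unfolding h
      using c by (auto intro!: diff_mono)
    ultimately show "\<exists>z\<in>E. z \<le> x \<and> z \<le> y" by blast
  next
    fix x assume "x \<in> E" then show "0 \<le> x" unfolding E_def U_def by auto
  next
    fix v assume hv: "\<forall>x\<in>E. v \<le> x"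
    have inU: "y - real n *\<^sub>R v \<in> U" if "y \<in> U" for y n
    proof (induction n)
      case 0 then show ?case using that by simp
    next
      case (Suc n)
      have eq: "y - real (Suc n) *\<^sub>R v = (y - real n *\<^sub>R v) - v" by (simp add: algebra_simps)
      have "\<forall>a\<in>A. a \<le> (y - real n *\<^sub>R v) - v"
      proof
        fix a assume "a \<in> A"
        hence "v \<le> (y - real n *\<^sub>R v) - a" using hv Suc E_def by blast
        thus "a \<le> (y - real n *\<^sub>R v) - v" by (simp add: algebra_simps)
      qed
      hence "(y - real n *\<^sub>R v) - v \<in> U" unfolding U_def by simp
      thus ?case unfolding eq .
    qed
    have nv: "real n *\<^sub>R v \<le> y0 - a0" for n
      using inU[OF y0, of n] a0 unfolding U_def by (auto simp: algebra_simps)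
    show "v \<le> 0"
    proof (rule closed_cone[OF BL])
      fix e :: real assume e: "e > 0"
      obtain n :: nat where n: "norm (y0 - a0) / e < real n" using reals_Archimedean2 by blast
      have npos: "real n > 0" using n e by (smt (verit) divide_nonneg_pos norm_ge_zero)
      have "v = (1 / real n) *\<^sub>R (real n *\<^sub>R v)" using npos by simp
      also have "\<dots> \<le> (1 / real n) *\<^sub>R (y0 - a0)" using nv npos by (intro scaleR_left_mono) auto
      finally have "v \<le> (1 / real n) *\<^sub>R (y0 - a0)" .
      moreover have "norm ((1 / real n) *\<^sub>R (y0 - a0)) < e"
      proof -
        have "norm ((1 / real n) *\<^sub>R (y0 - a0)) = norm (y0 - a0) / real n"
          using npos by simp
        also have "norm (y0 - a0) / real n < e"
          using n npos e by (simp add: pos_divide_less_eq mult.commute)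
        finally show ?thesis .
      qed
      ultimately show "\<exists>w. v \<le> w \<and> norm w < e" by blast
    qed
  qed
  have "\<forall>n::nat. \<exists>d. d \<in> E \<and> (\<forall>y\<in>E. y \<le> d \<longrightarrow> norm y < 1 / (real n + 1))"
  proof
    fix n :: nat
    have "1 / (real n + 1) > 0" by simp
    from OC_tail[OF OC netE this] show "\<exists>d. d \<in> E \<and> (\<forall>y\<in>E. y \<le> d \<longrightarrow> norm y < 1 / (real n + 1))" by blast
  qed
  from choice[OF this] obtain d where d: "\<forall>n. d n \<in> E \<and> (\<forall>y\<in>E. y \<le> d n \<longrightarrow> norm y < 1 / (real n + 1))"
    by blast
  have "\<forall>n. \<exists>p. fst p \<in> U \<and> snd p \<in> A \<and> d n = fst p - snd p"
  proof
    fix n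
    have "d n \<in> E" using d by blast
    then obtain y a where "y \<in> U" "a \<in> A" "d n = y - a" unfolding E_def by blast
    then show "\<exists>p. fst p \<in> U \<and> snd p \<in> A \<and> d n = fst p - snd p" by (intro exI[of _ "(y, a)"]) simp
  qed
  from choice[OF this] obtain p where p: "\<forall>n. fst (p n) \<in> U \<and> snd (p n) \<in> A \<and> d n = fst (p n) - snd (p n)"
    by blast
  define yy where "yy n = fst (p n)" for n
  define aa where "aa n = snd (p n)" for n
  have yy: "\<And>n. yy n \<in> U" "\<And>n. aa n \<in> A" using p yy_def aa_def by auto
  have dn: "yy n - aa n = d n" for n using p unfolding yy_def aa_def by simp
  have tail: "\<And>n y. y \<in> E \<Longrightarrow> y \<le> yy n - aa n \<Longrightarrow> norm y < 1 / (real n + 1)"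
    unfolding dn using d by blast
  have "\<forall>m. \<exists>c. c \<in> A \<and> (\<forall>b\<in>aa ` {..m}. b \<le> c)"
  proof
    fix m
    have "finite (aa ` {..m})" "aa ` {..m} \<subseteq> A" using yy by auto
    from finite_ub[OF dir ne this] obtain c where "c \<in> A" "\<forall>b\<in>aa ` {..m}. b \<le> c" by blast
    then show "\<exists>c. c \<in> A \<and> (\<forall>b\<in>aa ` {..m}. b \<le> c)" by blast
  qed
  from choice[OF this] obtain b where bb: "\<forall>m. b m \<in> A \<and> (\<forall>x\<in>aa ` {..m}. x \<le> b m)" by blast
  have b: "\<And>m. b m \<in> A" "\<And>m i. i \<le> m \<Longrightarrow> aa i \<le> b m" using bb by auto
  have small: "norm (yy n - b m) < 1 / (real n + 1)" if "n \<le> m" for n m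
  proof -
    have "yy n - b m \<in> E" unfolding E_def using yy b by blast
    moreover have "yy n - b m \<le> yy n - aa n" using b(2)[OF that] by (simp add: diff_mono)
    ultimately show ?thesis using tail by blast
  qed
  have "Cauchy b"
  proof (rule metric_CauchyI)
    fix e :: real assume e: "e > 0"
    obtain n :: nat where n: "2 / e < real n + 1" using arch1 by blast
    have "dist (b m) (b k) < e" if "m \<ge> n" "k \<ge> n" for m k
    proof -
      have "dist (b m) (b k) = norm ((yy n - b k) - (yy n - b m))" by (simp add: dist_norm algebra_simps)
      also have "\<dots> \<le> norm (yy n - b k) + norm (yy n - b m)" by (rule norm_triangle_ineq4)
      also have "\<dots> < 1 / (real n + 1) + 1 / (real n + 1)" using small that by (intro add_strict_mono) auto
      also have "1 / (real n + 1) + 1 / (real n + 1) = 2 / (real n + 1)" by (simp add: field_simps)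
      also have "\<dots> < e" using n e by (simp add: field_simps)
      finally show ?thesis .
    qed
    thus "\<exists>M. \<forall>m\<ge>M. \<forall>n\<ge>M. dist (b m) (b n) < e" by blast
  qed
  then obtain s where lim: "b \<longlonglongrightarrow> s" using Cauchy_convergent_iff convergent_def by blast
  have limn: "\<exists>M. \<forall>m\<ge>M. norm (b m - s) < e" if "e > 0" for e
    using lim that unfolding LIMSEQ_def dist_norm by blast
  have ub: "a \<le> s" if a: "a \<in> A" for a
  proof -
    have "a - s \<le> 0"
    proof (rule closed_cone[OF BL])
      fix e :: real assume e: "e > 0"
      obtain n :: nat where n: "2 / e < real n + 1" using arch1 by blast
      obtain M where M: "\<forall>m\<ge>M. norm (b m - s) < e / 2" using limn[of "e/2"] e by auto
      define m where "m = max M n"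
      have "norm (yy n - s) \<le> norm (yy n - b m) + norm (b m - s)"
        using norm_triangle_ineq[of "yy n - b m" "b m - s"] by simp
      also have "\<dots> < 1 / (real n + 1) + e / 2" using small[of n m] M m_def by (intro add_strict_mono) auto
      also have "\<dots> \<le> e" using n e by (simp add: field_simps)
      finally have "norm (yy n - s) < e" .
      moreover have "a - s \<le> yy n - s" using yy a U_def by auto
      ultimately show "\<exists>w. a - s \<le> w \<and> norm w < e" by blast
    qed
    thus ?thesis by simp
  qed
  have least: "s \<le> y" if y: "\<forall>a\<in>A. a \<le> y" for y
  proof -
    have "s - y \<le> 0"
    proof (rule closed_cone[OF BL])
      fix e :: real assume e: "e > 0"
      obtain M where M: "\<forall>m\<ge>M. norm (b m - s) < e" using limn e by auto
      have "s - y \<le> s - b M" using y b by (auto intro: diff_mono)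
      moreover have "norm (s - b M) < e" using M by (simp add: norm_minus_commute)
      ultimately show "\<exists>w. s - y \<le> w \<and> norm w < e" by blast
    qed
    thus ?thesis by simp
  qed
  show ?thesis unfolding is_lub_def using ub least by blast
qed

lemma dedekind:
  fixes A :: "'a::{banach, ordered_real_vector, lattice} set"
  assumes BL: "banach_lattice TYPE('a)" and OC: "order_continuous_norm TYPE('a)"
    and ne: "A \<noteq> {}" and bd: "\<exists>u. \<forall>a\<in>A. a \<le> u"
  shows "\<exists>s. is_lub s A"
proof -
  define D where "D = {Sup_fin B | B. finite B \<and> B \<noteq> {} \<and> B \<subseteq> A}"
  have ub_eq: "(\<forall>d\<in>D. d \<le> u) \<longleftrightarrow> (\<forall>a\<in>A. a \<le> u)" for u
  proof
    assume "\<forall>d\<in>D. d \<le> u"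
    moreover have "Sup_fin {a} \<in> D" if "a \<in> A" for a unfolding D_def using that by blast
    ultimately show "\<forall>a\<in>A. a \<le> u" by auto
  next
    assume "\<forall>a\<in>A. a \<le> u"
    show "\<forall>d\<in>D. d \<le> u"
    proof
      fix d assume "d \<in> D"
      then obtain B where "d = Sup_fin B" "finite B" "B \<noteq> {}" "B \<subseteq> A" unfolding D_def by blast
      then show "d \<le> u" using \<open>\<forall>a\<in>A. a \<le> u\<close> by (auto intro!: Sup_fin.boundedI)
    qed
  qed
  have "D \<noteq> {}" using ne unfolding D_def by blast
  moreover have "updir D" unfolding updir_def D_def
  proof (intro ballI)
    fix a b assume "a \<in> {Sup_fin B | B. finite B \<and> B \<noteq> {} \<and> B \<subseteq> A}" "b \<in> {Sup_fin B | B. finite B \<and> B \<noteq> {} \<and> B \<subseteq> A}"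
    then obtain B1 B2 where "a = Sup_fin B1" "b = Sup_fin B2" "finite B1" "finite B2" "B1 \<noteq> {}" "B2 \<noteq> {}" "B1 \<subseteq> A" "B2 \<subseteq> A" by blast
    then show "\<exists>c\<in>{Sup_fin B | B. finite B \<and> B \<noteq> {} \<and> B \<subseteq> A}. a \<le> c \<and> b \<le> c"
      by (intro bexI[of _ "Sup_fin (B1 \<union> B2)"]) (auto simp: Sup_fin.bounded_iff intro: Sup_fin.coboundedI)
  qed
  moreover have "\<exists>u. \<forall>d\<in>D. d \<le> u" using bd ub_eq by blast
  ultimately obtain s where "is_lub s D" using dedekind_dir[OF BL OC] by blast
  then have "(\<forall>d\<in>D. d \<le> s) \<and> (\<forall>u. (\<forall>d\<in>D. d \<le> u) \<longrightarrow> s \<le> u)" unfolding is_lub_def .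
  then have "(\<forall>a\<in>A. a \<le> s) \<and> (\<forall>u. (\<forall>a\<in>A. a \<le> u) \<longrightarrow> s \<le> u)" unfolding ub_eq .
  then show ?thesis unfolding is_lub_def by blast
qed


lemma cont_below:
  fixes T :: "'a::{banach, ordered_real_vector, lattice} \<Rightarrow> 'a"
  assumes BL: "banach_lattice TYPE('a)" and OC: "order_continuous_norm TYPE('a)"
    and cv: "convex_op T" and mo: "monotone_op T" and bo: "bounded_op T"
    and ne: "A \<noteq> {}" and dir: "updir A" and lub: "is_lub x A"
  shows "is_lub (T x) (T ` A)"
proof -
  have ax: "a \<le> x" if "a \<in> A" for a using lub that unfolding is_lub_def by blast
  have up: "\<forall>b\<in>T ` A. b \<le> T x" using ax mo unfolding monotone_op_def by blast
  have least: "T x \<le> u" if u: "\<forall>b\<in>T ` A. b \<le> u" for u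
  proof -
    define E where "E = {x - a | a. a \<in> A}"
    have netE: "net_down_to_zero E" unfolding net_down_to_zero_def
    proof (intro conjI ballI allI impI)
      show "E \<noteq> {}" using ne E_def by blast
    next
      fix p q assume "p \<in> E" "q \<in> E"
      then obtain a b where h: "p = x - a" "q = x - b" "a \<in> A" "b \<in> A" unfolding E_def by blast
      then obtain c where c: "c \<in> A" "a \<le> c" "b \<le> c" using dir unfolding updir_def by blast
      have "x - c \<in> E" using c E_def by blast
      moreover have "x - c \<le> p" "x - c \<le> q" using h c by auto
      ultimately show "\<exists>z\<in>E. z \<le> p \<and> z \<le> q" by blast
    next
      fix p assume "p \<in> E" then show "0 \<le> p" using ax unfolding E_def by auto
    next
      fix v assume hv: "\<forall>p\<in>E. v \<le> p"
      have "a \<le> x - v" if "a \<in> A" for a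
      proof -
        have "v \<le> x - a" using hv that E_def by blast
        thus ?thesis by (simp add: algebra_simps)
      qed
      hence "x \<le> x - v" using lub unfolding is_lub_def by blast
      thus "v \<le> 0" by simp
    qed
    define r where "r = norm x + 2"
    have "r > 0" unfolding r_def by (smt (verit) norm_ge_zero)
    then obtain M where M: "\<And>z. norm z \<le> r \<Longrightarrow> norm (T z) \<le> M" using bo unfolding bounded_op_def by blast
    have M0: "0 \<le> M" using M[of x] r_def by (smt (verit) norm_ge_zero)
    have "T x - u \<le> 0"
    proof (rule closed_cone[OF BL])
      fix e :: real assume e: "e > 0"
      define \<mu> where "\<mu> = min 1 (e / (2 * M + 1))"
      have mu: "0 < \<mu>" "\<mu> \<le> 1" "\<mu> \<le> e / (2 * M + 1)" unfolding \<mu>_def using e M0 by auto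
      obtain d where d: "d \<in> E" "\<forall>y\<in>E. y \<le> d \<longrightarrow> norm y < \<mu>" using OC_tail[OF OC netE mu(1)] by blast
      then obtain a where a: "a \<in> A" "d = x - a" unfolding E_def by blast
      have nd: "norm (x - a) < \<mu>" using d a by auto
      define z where "z = a + (1 / \<mu>) *\<^sub>R (x - a)"
      have na: "norm a \<le> r"
      proof -
        have "norm a \<le> norm x + norm (x - a)" using norm_triangle_ineq4[of x "x - a"] by simp
        thus ?thesis using nd mu unfolding r_def by linarith
      qed
      have nz: "norm z \<le> r"
      proof -
        have "norm z \<le> norm a + norm ((1 / \<mu>) *\<^sub>R (x - a))" unfolding z_def by (rule norm_triangle_ineq)
        also have "norm ((1 / \<mu>) *\<^sub>R (x - a)) = norm (x - a) / \<mu>" using mu by simp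
        also have "norm (x - a) / \<mu> \<le> 1" using nd mu by simp
        finally have "norm z \<le> norm a + 1" by simp
        moreover have "norm a \<le> norm x + 1"
          using norm_triangle_ineq4[of x "x - a"] nd mu by simp
        ultimately show ?thesis unfolding r_def by linarith
      qed
      have xz: "x = \<mu> *\<^sub>R z + (1 - \<mu>) *\<^sub>R a"
        unfolding z_def using mu by (simp add: algebra_simps)
      have "T x \<le> \<mu> *\<^sub>R T z + (1 - \<mu>) *\<^sub>R T a"
        using cv mu unfolding convex_op_def xz by simp
      hence "T x - T a \<le> \<mu> *\<^sub>R (T z - T a)" by (simp add: algebra_simps)
      moreover have "T a \<le> u" using u a by blast
      ultimately have le: "T x - u \<le> \<mu> *\<^sub>R (T z - T a)" by (smt (verit) diff_left_mono order_trans)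
      have "norm (\<mu> *\<^sub>R (T z - T a)) = \<mu> * norm (T z - T a)" using mu by simp
      also have "\<dots> \<le> \<mu> * (2 * M)"
      proof -
        have "norm (T z - T a) \<le> norm (T z) + norm (T a)" by (rule norm_triangle_ineq4)
        also have "\<dots> \<le> 2 * M" using M[OF nz] M[OF na] by simp
        finally show ?thesis using mu by (simp add: mult_left_mono)
      qed
      also have "\<dots> < e"
      proof -
        have "\<mu> * (2 * M) \<le> e / (2 * M + 1) * (2 * M)" using mult_right_mono[OF mu(3), of "2 * M"] M0 by simp
        also have "\<dots> < e" using e M0 by (simp add: field_simps)
        finally show ?thesis .
      qed
      finally show "\<exists>w. T x - u \<le> w \<and> norm w < e" using le by blast
    qed
    thus ?thesis by simp
  qed
  show ?thesis unfolding is_lub_def using up least by blast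
qed


locale env =
  fixes F :: "'l \<Rightarrow> real \<Rightarrow> 'a::{banach, ordered_real_vector, lattice} \<Rightarrow> 'a"
    and Lam :: "'l set"
  assumes BL: "banach_lattice TYPE('a)"
    and OC: "order_continuous_norm TYPE('a)"
    and nonempty: "Lam \<noteq> {}"
    and sg: "\<forall>l\<in>Lam. semigroup (F l) \<and> convex_sg (F l) \<and> monotone_sg (F l)"
    and bdd: "\<forall>x. \<forall>t>0. \<exists>u. \<forall>l\<in>Lam. F l t x \<le> u"
begin

abbreviation "J \<equiv> J_op F Lam"

lemma Fsg: "l \<in> Lam \<Longrightarrow> semigroup (F l)"
  using sg by blast

lemma F0: "l \<in> Lam \<Longrightarrow> F l 0 x = x"
proof -
  assume "l \<in> Lam"
  then have "F l 0 = id" using Fsg unfolding semigroup_def by blast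
  then show ?thesis by simp
qed

lemma Fadd: "l \<in> Lam \<Longrightarrow> a \<ge> 0 \<Longrightarrow> b \<ge> 0 \<Longrightarrow> F l (a + b) x = F l a (F l b x)"
proof -
  assume "l \<in> Lam" "a \<ge> 0" "b \<ge> 0"
  then have "F l (a + b) = F l a \<circ> F l b" using Fsg unfolding semigroup_def by blast
  then show ?thesis by simp
qed

lemma Fmono: "l \<in> Lam \<Longrightarrow> h \<ge> 0 \<Longrightarrow> x \<le> y \<Longrightarrow> F l h x \<le> F l h y"
  using sg unfolding monotone_sg_def monotone_op_def by auto

lemma Fconvop: "l \<in> Lam \<Longrightarrow> h \<ge> 0 \<Longrightarrow> convex_op (F l h)"
  using sg unfolding convex_sg_def by auto

lemma Fmonoop: "l \<in> Lam \<Longrightarrow> h \<ge> 0 \<Longrightarrow> monotone_op (F l h)"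
  using sg unfolding monotone_sg_def by auto

lemma Fbdd: "l \<in> Lam \<Longrightarrow> h \<ge> 0 \<Longrightarrow> bounded_op (F l h)"
  using Fsg unfolding semigroup_def by blast

lemma Jlub: "h > 0 \<Longrightarrow> is_lub (J h x) {F l h x | l. l \<in> Lam}"
proof -
  assume h: "h > 0"
  have ne: "{F l h x | l. l \<in> Lam} \<noteq> {}" using nonempty by blast
  have "\<forall>t>0. \<exists>u. \<forall>l\<in>Lam. F l t x \<le> u" using bdd by (rule spec)
  then obtain u where u: "\<forall>l\<in>Lam. F l h x \<le> u" using h by blast
  have bd: "\<exists>u. \<forall>a\<in>{F l h x | l. l \<in> Lam}. a \<le> u"
    by (rule exI[of _ u]) (use u in blast)
  obtain s where s: "is_lub s {F l h x | l. l \<in> Lam}" using dedekind[OF BL OC ne bd] by blast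
  have "J h x = s" unfolding J_op_def using h lub_of_eq[OF s] by simp
  then show ?thesis using s by simp
qed

lemma Jge: "l \<in> Lam \<Longrightarrow> h \<ge> 0 \<Longrightarrow> F l h x \<le> J h x"
proof -
  assume l: "l \<in> Lam" and h: "h \<ge> 0"
  show ?thesis
  proof (cases "h = 0")
    case True then show ?thesis using F0 l unfolding J_op_def by simp
  next
    case False then show ?thesis using Jlub[of h x] h l unfolding is_lub_def by auto
  qed
qed

lemma Jle: "h > 0 \<Longrightarrow> (\<And>l. l \<in> Lam \<Longrightarrow> F l h x \<le> u) \<Longrightarrow> J h x \<le> u"
  using Jlub[of h x] unfolding is_lub_def by blast

lemma J0: "J 0 x = x" unfolding J_op_def by simp

lemma Jmono: "h \<ge> 0 \<Longrightarrow> x \<le> y \<Longrightarrow> J h x \<le> J h y"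
proof -
  assume h: "h \<ge> 0" and xy: "x \<le> y"
  show ?thesis
  proof (cases "h = 0")
    case True then show ?thesis using xy by (simp add: J0)
  next
    case False
    then show ?thesis using h
      by (intro Jle) (auto intro: order_trans[OF Fmono[OF _ h xy] Jge[OF _ h]])
  qed
qed

lemma Jconv:
  assumes h: "h \<ge> 0" and m: "0 \<le> \<mu>" "\<mu> \<le> 1"
  shows "J h (\<mu> *\<^sub>R x + (1 - \<mu>) *\<^sub>R y) \<le> \<mu> *\<^sub>R J h x + (1 - \<mu>) *\<^sub>R J h y"
proof (cases "h = 0")
  case True then show ?thesis by (simp add: J0)
next
  case False
  show ?thesis
  proof (rule Jle)
    show "h > 0" using h False by simp
  next
    fix l assume l: "l \<in> Lam"
    have "F l h (\<mu> *\<^sub>R x + (1 - \<mu>) *\<^sub>R y) \<le> \<mu> *\<^sub>R F l h x + (1 - \<mu>) *\<^sub>R F l h y"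
      using Fconvop[OF l h] m unfolding convex_op_def by blast
    also have "\<dots> \<le> \<mu> *\<^sub>R J h x + (1 - \<mu>) *\<^sub>R J h y"
      using m Jge[OF l h] by (intro add_mono scaleR_left_mono) auto
    finally show "F l h (\<mu> *\<^sub>R x + (1 - \<mu>) *\<^sub>R y) \<le> \<mu> *\<^sub>R J h x + (1 - \<mu>) *\<^sub>R J h y" .
  qed
qed

lemma J3: "a \<ge> 0 \<Longrightarrow> b \<ge> 0 \<Longrightarrow> J (a + b) x \<le> J a (J b x)"
proof -
  assume a: "a \<ge> 0" and b: "b \<ge> 0"
  show ?thesis
  proof (cases "a + b = 0")
    case True then have "a = 0" "b = 0" using a b by auto
    then show ?thesis by (simp add: J0)
  next
    case False
    show ?thesis
    proof (rule Jle)
      show "a + b > 0" using a b False by simp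
    next
      fix l assume l: "l \<in> Lam"
      have "F l (a + b) x = F l a (F l b x)" by (rule Fadd[OF l a b])
      also have "\<dots> \<le> F l a (J b x)" by (rule Fmono[OF l a Jge[OF l b]])
      also have "\<dots> \<le> J a (J b x)" by (rule Jge[OF l a])
      finally show "F l (a + b) x \<le> J a (J b x)" .
    qed
  qed
qed

lemma Jcont:
  assumes h: "h \<ge> 0" and ne: "A \<noteq> {}" and dir: "updir A" and lub: "is_lub x A"
  shows "is_lub (J h x) (J h ` A)"
proof (cases "h = 0")
  case True then show ?thesis using lub by (simp add: J0)
next
  case False
  then have hp: "h > 0" using h by simp
  have up: "\<forall>b\<in>J h ` A. b \<le> J h x" using lub Jmono[OF h] unfolding is_lub_def by blast
  have "J h x \<le> u" if u: "\<forall>b\<in>J h ` A. b \<le> u" for u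
  proof (rule Jle[OF hp])
    fix l assume l: "l \<in> Lam"
    have "is_lub (F l h x) (F l h ` A)"
      by (rule cont_below[OF BL OC Fconvop[OF l h] Fmonoop[OF l h] Fbdd[OF l h] ne dir lub])
    moreover have "\<forall>b\<in>F l h ` A. b \<le> u" using u Jge[OF l h] by (fastforce intro: order_trans)
    ultimately show "F l h x \<le> u" unfolding is_lub_def by blast
  qed
  then show ?thesis using up unfolding is_lub_def by blast
qed

lemma lub_scale:
  assumes "is_lub s A" "(\<mu>::real) > 0"
  shows "is_lub (\<mu> *\<^sub>R s) ((\<lambda>a. \<mu> *\<^sub>R a) ` (A::'a set))"
proof -
  have up: "\<forall>b\<in>(\<lambda>a. \<mu> *\<^sub>R a) ` A. b \<le> \<mu> *\<^sub>R s"
    using assms unfolding is_lub_def by (auto intro: scaleR_left_mono)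
  have "\<mu> *\<^sub>R s \<le> u" if u: "\<forall>b\<in>(\<lambda>a. \<mu> *\<^sub>R a) ` A. b \<le> u" for u
  proof -
    have "a \<le> (1 / \<mu>) *\<^sub>R u" if "a \<in> A" for a
    proof -
      have "\<mu> *\<^sub>R a \<le> u" using u that by blast
      hence "(1 / \<mu>) *\<^sub>R (\<mu> *\<^sub>R a) \<le> (1 / \<mu>) *\<^sub>R u" using assms(2) by (intro scaleR_left_mono) auto
      thus ?thesis using assms(2) by simp
    qed
    hence "s \<le> (1 / \<mu>) *\<^sub>R u" using assms(1) unfolding is_lub_def by blast
    hence "\<mu> *\<^sub>R s \<le> \<mu> *\<^sub>R ((1 / \<mu>) *\<^sub>R u)" using assms(2) by (intro scaleR_left_mono) auto
    thus ?thesis using assms(2) by simp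
  qed
  then show ?thesis using up unfolding is_lub_def by blast
qed

lemma Jhom:
  assumes sub: "\<forall>l\<in>Lam. sublinear_sg (F l)" and h: "h \<ge> 0" and m: "\<mu> > 0"
  shows "J h (\<mu> *\<^sub>R x) = \<mu> *\<^sub>R J h x"
proof (cases "h = 0")
  case True then show ?thesis by (simp add: J0)
next
  case False
  then have hp: "h > 0" using h by simp
  have hom: "F l h (\<mu> *\<^sub>R x) = \<mu> *\<^sub>R F l h x" if l: "l \<in> Lam" for l
  proof -
    have "sublinear_sg (F l)" using sub l by blast
    then have "sublinear_op (F l h)" using h unfolding sublinear_sg_def by blast
    then have "pos_homogeneous_op (F l h)" unfolding sublinear_op_def by blast
    then show ?thesis unfolding pos_homogeneous_op_def using m by blast
  qed
  have "{F l h (\<mu> *\<^sub>R x) | l. l \<in> Lam} = (\<lambda>a. \<mu> *\<^sub>R a) ` {F l h x | l. l \<in> Lam}"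
  proof (rule set_eqI, rule iffI)
    fix y assume "y \<in> {F l h (\<mu> *\<^sub>R x) | l. l \<in> Lam}"
    then obtain l where l: "l \<in> Lam" "y = F l h (\<mu> *\<^sub>R x)" by blast
    then have "y = \<mu> *\<^sub>R F l h x" using hom by simp
    moreover have "F l h x \<in> {F l h x | l. l \<in> Lam}" using l by blast
    ultimately show "y \<in> (\<lambda>a. \<mu> *\<^sub>R a) ` {F l h x | l. l \<in> Lam}" by (rule image_eqI)
  next
    fix y assume "y \<in> (\<lambda>a. \<mu> *\<^sub>R a) ` {F l h x | l. l \<in> Lam}"
    then obtain l where l: "l \<in> Lam" "y = \<mu> *\<^sub>R F l h x" by blast
    then have "y = F l h (\<mu> *\<^sub>R x)" using hom by simp
    then show "y \<in> {F l h (\<mu> *\<^sub>R x) | l. l \<in> Lam}" using l by blast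
  qed
  then have "is_lub (\<mu> *\<^sub>R J h x) {F l h (\<mu> *\<^sub>R x) | l. l \<in> Lam}"
    using lub_scale[OF Jlub[OF hp] m] by simp
  then show ?thesis using is_lub_unique[OF Jlub[OF hp]] by blast
qed

end


lemma fin_min_induct[consumes 2, case_names single insert]:
  fixes P :: "real set \<Rightarrow> bool"
  assumes fin: "finite \<pi>" and ne: "\<pi> \<noteq> {}"
    and single: "\<And>a. P {a}"
    and ins: "\<And>a \<pi>'. finite \<pi>' \<Longrightarrow> \<pi>' \<noteq> {} \<Longrightarrow> (\<forall>b\<in>\<pi>'. a < b) \<Longrightarrow> P \<pi>' \<Longrightarrow> P (insert a \<pi>')"
  shows "P \<pi>"
  using fin ne
proof (induction "card \<pi>" arbitrary: \<pi> rule: less_induct)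
  case less
  show ?case
  proof (cases "card \<pi> = 1")
    case True
    then obtain a where "\<pi> = {a}" using card_1_singletonE by blast
    then show ?thesis using single by simp
  next
    case False
    define a where "a = Min \<pi>"
    define \<pi>' where "\<pi>' = \<pi> - {a}"
    have ain: "a \<in> \<pi>" unfolding a_def using less by simp
    have eq: "\<pi> = insert a \<pi>'" unfolding \<pi>'_def using ain by blast
    have fin': "finite \<pi>'" using less \<pi>'_def by simp
    have card': "card \<pi>' < card \<pi>" unfolding \<pi>'_def using ain less by (intro card_Diff1_less) auto
    have ne': "\<pi>' \<noteq> {}"
    proof
      assume "\<pi>' = {}"
      then have "\<pi> = {a}" using eq by simp
      then show False using False by simp
    qed
    have lt: "\<forall>b\<in>\<pi>'. a < b"
    proof
      fix b assume "b \<in> \<pi>'"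
      then have b: "b \<in> \<pi>" "b \<noteq> a" unfolding \<pi>'_def by auto
      then have "a \<le> b" unfolding a_def using less by simp
      then show "a < b" using b by simp
    qed
    have "P \<pi>'" using less(1)[OF card' fin' ne'] .
    then show ?thesis using ins[OF fin' ne' lt] eq by simp
  qed
qed

lemma Min_insert_less: "finite \<pi>' \<Longrightarrow> \<pi>' \<noteq> {} \<Longrightarrow> \<forall>b\<in>\<pi>'. a < b \<Longrightarrow> Min (insert a \<pi>') = (a::real)"
  by (simp add: Min_insert min_def) (meson Min_in less_imp_le)

lemma Max_insert_less: "finite \<pi>' \<Longrightarrow> \<pi>' \<noteq> {} \<Longrightarrow> \<forall>b\<in>\<pi>'. a < b \<Longrightarrow> Max (insert a \<pi>') = Max (\<pi>'::real set)"
  by (simp add: Max_insert max_def) (meson Max_in less_imp_le)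

lemma gap_pos: "finite \<pi>' \<Longrightarrow> \<pi>' \<noteq> {} \<Longrightarrow> \<forall>b\<in>\<pi>'. a < b \<Longrightarrow> Min \<pi>' - a > (0::real)"
proof -
  assume "finite \<pi>'" "\<pi>' \<noteq> {}" "\<forall>b\<in>\<pi>'. a < b"
  moreover have "Min \<pi>' \<in> \<pi>'" using calculation by (intro Min_in)
  ultimately show ?thesis by simp
qed

lemma lt_Max: "finite \<pi>' \<Longrightarrow> \<pi>' \<noteq> {} \<Longrightarrow> \<forall>b\<in>\<pi>'. a < b \<Longrightarrow> a < Max (\<pi>'::real set)"
proof -
  assume "finite \<pi>'" "\<pi>' \<noteq> {}" "\<forall>b\<in>\<pi>'. a < b"
  moreover have "Max \<pi>' \<in> \<pi>'" using calculation by (intro Max_in)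
  ultimately show ?thesis by simp
qed

lemma Min_le_Max_r: "finite A \<Longrightarrow> A \<noteq> {} \<Longrightarrow> Min A \<le> Max (A::real set)"
  using Min_in Max_ge by blast

lemma Gsingle: "J_part F Lam {a} x = x"
  unfolding J_part_def by simp

lemma Ginsert:
  assumes "finite \<pi>'" "\<pi>' \<noteq> {}" "\<forall>b\<in>\<pi>'. a < b"
  shows "J_part F Lam (insert a \<pi>') x = J_op F Lam (Min \<pi>' - a) (J_part F Lam \<pi>' x)"
proof -
  have a: "a \<notin> \<pi>'" using assms(3) by blast
  have "sorted_list_of_set (insert a \<pi>') = Min (insert a \<pi>') # sorted_list_of_set (insert a \<pi>' - {Min (insert a \<pi>')})"
    using assms by (intro sorted_list_of_set_nonempty) auto
  also have "Min (insert a \<pi>') = a" using Min_insert_less[OF assms] .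
  also have "insert a \<pi>' - {a} = \<pi>'" using a by simp
  finally have s1: "sorted_list_of_set (insert a \<pi>') = a # sorted_list_of_set \<pi>'" .
  have s2: "sorted_list_of_set \<pi>' = Min \<pi>' # sorted_list_of_set (\<pi>' - {Min \<pi>'})"
    using assms by (intro sorted_list_of_set_nonempty) auto
  show ?thesis unfolding J_part_def s1 unfolding s2 by simp
qed

lemma Gshift:
  assumes "finite \<pi>" "\<pi> \<noteq> {}"
  shows "J_part F Lam ((+) c ` \<pi>) x = J_part F Lam \<pi> x"
  using assms
proof (induction \<pi> arbitrary: x rule: fin_min_induct)
  case (single a) then show ?case by (simp add: Gsingle)
next
  case (insert a \<pi>')
  have m: "Min ((+) c ` \<pi>') = c + Min \<pi>'"
    using mono_Min_commute[of "(+) c" \<pi>'] insert by (simp add: mono_def)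
  have "J_part F Lam ((+) c ` insert a \<pi>') x = J_part F Lam (insert (c + a) ((+) c ` \<pi>')) x" by simp
  also have "\<dots> = J_op F Lam (Min ((+) c ` \<pi>') - (c + a)) (J_part F Lam ((+) c ` \<pi>') x)"
    using insert by (intro Ginsert) auto
  also have "\<dots> = J_op F Lam (Min \<pi>' - a) (J_part F Lam \<pi>' x)" using m insert by simp
  also have "\<dots> = J_part F Lam (insert a \<pi>') x" using insert by (simp add: Ginsert)
  finally show ?case .
qed

lemma Gcomp:
  assumes "finite \<pi>" "\<pi> \<noteq> {}" "finite \<sigma>" "\<sigma> \<noteq> {}" "Max \<pi> = Min \<sigma>"
  shows "J_part F Lam (\<pi> \<union> \<sigma>) x = J_part F Lam \<pi> (J_part F Lam \<sigma> x)"
  using assms(1,2,5)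
proof (induction \<pi> arbitrary: x rule: fin_min_induct)
  case (single a)
  then have "a \<in> \<sigma>" using assms(3,4) by simp
  then have "{a} \<union> \<sigma> = \<sigma>" by blast
  then show ?case by (simp add: Gsingle)
next
  case (insert a \<pi>')
  have mx: "Max \<pi>' = Min \<sigma>" using insert Max_insert_less[of \<pi>' a] by simp
  have ltm: "a < Max \<pi>'" using insert lt_Max by blast
  have lt: "\<forall>b\<in>\<pi>' \<union> \<sigma>. a < b"
  proof
    fix b assume "b \<in> \<pi>' \<union> \<sigma>"
    then show "a < b"
    proof
      assume "b \<in> \<pi>'" then show ?thesis using insert by blast
    next
      assume "b \<in> \<sigma>" then have "Min \<sigma> \<le> b" using assms(3) by simp
      then show ?thesis using mx ltm by simp
    qed
  qed
  have mn: "Min (\<pi>' \<union> \<sigma>) = Min \<pi>'"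
  proof -
    have "Min (\<pi>' \<union> \<sigma>) = min (Min \<pi>') (Min \<sigma>)" using insert assms(3,4) by (simp add: Min_Un)
    moreover have "Min \<pi>' \<le> Max \<pi>'" using insert(1,2) by (rule Min_le_Max_r)
    ultimately show ?thesis using mx by simp
  qed
  have "J_part F Lam (insert a \<pi>' \<union> \<sigma>) x = J_part F Lam (insert a (\<pi>' \<union> \<sigma>)) x" by simp
  also have "\<dots> = J_op F Lam (Min (\<pi>' \<union> \<sigma>) - a) (J_part F Lam (\<pi>' \<union> \<sigma>) x)"
    using insert assms(3) lt by (intro Ginsert) auto
  also have "\<dots> = J_op F Lam (Min \<pi>' - a) (J_part F Lam \<pi>' (J_part F Lam \<sigma> x))"
    using mn insert mx by simp
  also have "\<dots> = J_part F Lam (insert a \<pi>') (J_part F Lam \<sigma> x)" using insert by (simp add: Ginsert)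
  finally show ?case .
qed

definition updir_pres :: "('a::order \<Rightarrow> 'a) \<Rightarrow> bool" where
  "updir_pres f \<longleftrightarrow> (\<forall>x y. x \<le> y \<longrightarrow> f x \<le> f y)"

lemma updir_image: "updir A \<Longrightarrow> (\<And>x y. x \<le> y \<Longrightarrow> f x \<le> f y) \<Longrightarrow> updir (f ` A)"
  unfolding updir_def by (metis image_iff)

context env
begin

abbreviation "G \<equiv> J_part F Lam"

lemma Gins: "finite \<pi>' \<Longrightarrow> \<pi>' \<noteq> {} \<Longrightarrow> \<forall>b\<in>\<pi>'. a < b \<Longrightarrow> G (insert a \<pi>') x = J (Min \<pi>' - a) (G \<pi>' x)"
  by (rule Ginsert)


lemma Gmono:
  assumes "finite \<pi>" "\<pi> \<noteq> {}" "x \<le> y"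
  shows "G \<pi> x \<le> G \<pi> y"
  using assms(1,2,3)
proof (induction \<pi> arbitrary: x y rule: fin_min_induct)
  case (single a) then show ?case by (simp add: Gsingle)
next
  case (insert a \<pi>')
  have "G \<pi>' x \<le> G \<pi>' y" using insert by blast
  moreover have "Min \<pi>' - a \<ge> 0" using gap_pos[OF insert(1-3)] by linarith
  ultimately show ?case using insert by (simp add: Gins Jmono)
qed

lemma Gref:
  assumes "finite \<pi>" "\<pi> \<noteq> {}" "Min \<pi> \<le> r" "r \<le> Max \<pi>"
  shows "G \<pi> x \<le> G (insert r \<pi>) x"
  using assms
proof (induction \<pi> arbitrary: x r rule: fin_min_induct)
  case (single a) then show ?case by simp
next
  case (insert a \<pi>')
  have mn: "Min (insert a \<pi>') = a" and mx: "Max (insert a \<pi>') = Max \<pi>'"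
    using Min_insert_less Max_insert_less insert by auto
  show ?case
  proof (cases "r \<in> insert a \<pi>'")
    case True then show ?thesis by (simp add: insert_absorb)
  next
    case False
    then have ar: "a < r" using insert mn by auto
    have rins: "insert r (insert a \<pi>') = insert a (insert r \<pi>')" by blast
    have lt2: "\<forall>b\<in>insert r \<pi>'. a < b" using insert ar by auto
    define m where "m = Min \<pi>'"
    have ma: "a < m" unfolding m_def using gap_pos[OF insert(1-3)] by linarith
    show ?thesis
    proof (cases "r < m")
      case True
      have ltr: "\<forall>b\<in>\<pi>'. r < b" using True insert unfolding m_def by (meson Min_le order_less_le_trans)
      have mr: "Min (insert r \<pi>') = r" using Min_insert_less[OF _ _ ltr] insert by simp
      have "G (insert a \<pi>') x = J ((r - a) + (m - r)) (G \<pi>' x)" using insert by (simp add: Gins m_def)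
      also have "\<dots> \<le> J (r - a) (J (m - r) (G \<pi>' x))" using ar True by (intro J3) auto
      also have "J (m - r) (G \<pi>' x) = G (insert r \<pi>') x" using insert ltr by (simp add: Gins m_def)
      also have "J (r - a) (G (insert r \<pi>') x) = G (insert a (insert r \<pi>')) x"
        using insert lt2 mr by (simp add: Gins)
      finally show ?thesis using rins by simp
    next
      case False
      have "Min (insert r \<pi>') = min r (Min \<pi>')" using insert(1,2) by (rule Min_insert)
      then have mr: "Min (insert r \<pi>') = m" unfolding m_def using False m_def by simp
      have rr1: "Min \<pi>' \<le> r" using False m_def by linarith
      have rr2: "r \<le> Max \<pi>'" using insert.prems mx by simp
      note rr = rr1 rr2
      have "G (insert a \<pi>') x = J (m - a) (G \<pi>' x)" using insert by (simp add: Gins m_def)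
      also have "\<dots> \<le> J (m - a) (G (insert r \<pi>') x)" using insert.IH[OF rr] ma by (intro Jmono) auto
      also have "\<dots> = G (insert a (insert r \<pi>')) x" using insert lt2 mr by (simp add: Gins)
      finally show ?thesis using rins by simp
    qed
  qed
qed

lemma Gref_set:
  assumes "finite \<pi>" "\<pi> \<noteq> {}" "finite \<sigma>" "\<sigma> \<subseteq> {Min \<pi>..Max \<pi>}"
  shows "G \<pi> x \<le> G (\<pi> \<union> \<sigma>) x"
  using assms(3,4)
proof (induction \<sigma> rule: finite_induct)
  case empty then show ?case by simp
next
  case (insert r \<sigma>)
  have mn: "Min (\<pi> \<union> \<sigma>) = Min \<pi>"
    using insert assms by (intro Min_eqI) (auto intro: Min_in)
  have mx: "Max (\<pi> \<union> \<sigma>) = Max \<pi>"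
    using insert assms by (intro Max_eqI) (auto intro: Max_in)
  have "G \<pi> x \<le> G (\<pi> \<union> \<sigma>) x" using insert by simp
  also have "\<dots> \<le> G (insert r (\<pi> \<union> \<sigma>)) x"
    using insert assms mn mx by (intro Gref) auto
  finally show ?case by simp
qed

lemma Gconv:
  assumes "finite \<pi>" "\<pi> \<noteq> {}" "0 \<le> \<mu>" "\<mu> \<le> 1"
  shows "G \<pi> (\<mu> *\<^sub>R x + (1 - \<mu>) *\<^sub>R y) \<le> \<mu> *\<^sub>R G \<pi> x + (1 - \<mu>) *\<^sub>R G \<pi> y"
  using assms(1,2)
proof (induction \<pi> arbitrary: x y rule: fin_min_induct)
  case (single a) then show ?case by (simp add: Gsingle)
next
  case (insert a \<pi>')
  define c where "c = Min \<pi>' - a"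
  have c: "c \<ge> 0" using gap_pos[OF insert(1-3)] unfolding c_def by linarith
  have "G (insert a \<pi>') (\<mu> *\<^sub>R x + (1 - \<mu>) *\<^sub>R y) = J c (G \<pi>' (\<mu> *\<^sub>R x + (1 - \<mu>) *\<^sub>R y))"
    using insert by (simp add: Gins c_def)
  also have "\<dots> \<le> J c (\<mu> *\<^sub>R G \<pi>' x + (1 - \<mu>) *\<^sub>R G \<pi>' y)" using insert c by (intro Jmono) auto
  also have "\<dots> \<le> \<mu> *\<^sub>R J c (G \<pi>' x) + (1 - \<mu>) *\<^sub>R J c (G \<pi>' y)" using c assms by (intro Jconv) auto
  also have "\<dots> = \<mu> *\<^sub>R G (insert a \<pi>') x + (1 - \<mu>) *\<^sub>R G (insert a \<pi>') y"
    using insert by (simp add: Gins c_def)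
  finally show ?case .
qed

lemma Ghom:
  assumes sub: "\<forall>l\<in>Lam. sublinear_sg (F l)" and "finite \<pi>" "\<pi> \<noteq> {}" "\<mu> > 0"
  shows "G \<pi> (\<mu> *\<^sub>R x) = \<mu> *\<^sub>R G \<pi> x"
  using assms(2,3)
proof (induction \<pi> arbitrary: x rule: fin_min_induct)
  case (single a) then show ?case by (simp add: Gsingle)
next
  case (insert a \<pi>')
  have c: "Min \<pi>' - a \<ge> 0" using gap_pos[OF insert(1-3)] by linarith
  show ?case using insert Jhom[OF sub c assms(4)] by (simp add: Gins)
qed

lemma Gcont:
  assumes "finite \<pi>" "\<pi> \<noteq> {}" "A \<noteq> {}" "updir A" "is_lub x A"
  shows "is_lub (G \<pi> x) (G \<pi> ` A)"
  using assms(1,2,5)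
proof (induction \<pi> arbitrary: x rule: fin_min_induct)
  case (single a)
  have "G {a} ` A = A" by (simp add: Gsingle)
  then show ?case using single by (simp add: Gsingle)
next
  case (insert a \<pi>')
  define c where "c = Min \<pi>' - a"
  have c: "c \<ge> 0" using gap_pos[OF insert(1-3)] unfolding c_def by linarith
  have l1: "is_lub (G \<pi>' x) (G \<pi>' ` A)" using insert by blast
  have d1: "updir (G \<pi>' ` A)" using assms(4) Gmono insert by (intro updir_image) auto
  have "is_lub (J c (G \<pi>' x)) (J c ` G \<pi>' ` A)"
    using Jcont[OF c _ d1 l1] assms(3) by blast
  moreover have "J c ` G \<pi>' ` A = G (insert a \<pi>') ` A"
    using insert by (auto simp: Gins c_def image_image)
  moreover have "J c (G \<pi>' x) = G (insert a \<pi>') x" using insert by (simp add: Gins c_def)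
  ultimately show ?case by simp
qed

lemma GleT:
  assumes T: "semigroup T" "\<forall>l\<in>Lam. sg_le (F l) T" and "finite \<pi>" "\<pi> \<noteq> {}"
  shows "G \<pi> x \<le> T (Max \<pi> - Min \<pi>) x"
  using assms(3,4)
proof (induction \<pi> arbitrary: x rule: fin_min_induct)
  case (single a)
  have "T 0 = id" using T unfolding semigroup_def by blast
  then show ?case by (simp add: Gsingle)
next
  case (insert a \<pi>')
  define c where "c = Min \<pi>' - a"
  have cp: "c > 0" using gap_pos[OF insert(1-3)] unfolding c_def by linarith
  have JT: "J c y \<le> T c y" for y
  proof (rule Jle[OF cp])
    fix l assume "l \<in> Lam" then show "F l c y \<le> T c y" using T cp unfolding sg_le_def by auto
  qed
  have d: "Max \<pi>' - Min \<pi>' \<ge> 0" using insert by simp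
  have "G (insert a \<pi>') x = J c (G \<pi>' x)" using insert by (simp add: Gins c_def)
  also have "\<dots> \<le> J c (T (Max \<pi>' - Min \<pi>') x)" using insert cp by (intro Jmono) auto
  also have "\<dots> \<le> T c (T (Max \<pi>' - Min \<pi>') x)" by (rule JT)
  also have "\<dots> = T (c + (Max \<pi>' - Min \<pi>')) x" using T cp d unfolding semigroup_def by simp
  also have "c + (Max \<pi>' - Min \<pi>') = Max (insert a \<pi>') - Min (insert a \<pi>')"
    using insert Min_insert_less Max_insert_less c_def by simp
  finally show ?case .
qed

end


locale env2 = env F Lam
  for F :: "'l \<Rightarrow> real \<Rightarrow> 'a::{banach, ordered_real_vector, lattice} \<Rightarrow> 'a" and Lam :: "'l set" +
  fixes C :: "real \<Rightarrow> 'a \<Rightarrow> 'a"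
  assumes Cbd: "\<forall>t\<ge>0. bounded_op (C t)"
    and JC: "\<forall>t\<ge>0. \<forall>\<pi>\<in>partitions t. \<forall>x. J_part F Lam \<pi> x \<le> C t x"
begin

definition Sv :: "real \<Rightarrow> 'a \<Rightarrow> 'a" where
  "Sv t x = lub_of {J_part F Lam \<pi> x | \<pi>. \<pi> \<in> partitions t}"

abbreviation "Pset t x \<equiv> {J_part F Lam \<pi> x | \<pi>. \<pi> \<in> partitions t}"

lemma part_basic:
  assumes "\<pi> \<in> partitions t"
  shows "finite \<pi>" "\<pi> \<noteq> {}" "Min \<pi> = 0" "Max \<pi> = t" "\<pi> \<subseteq> {0..}" "0 \<in> \<pi>" "t \<ge> 0"
proof -
  show f: "finite \<pi>" and z: "0 \<in> \<pi>" and mx: "Max \<pi> = t" and sub: "\<pi> \<subseteq> {0..}"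
    using assms unfolding partitions_def by auto
  show ne: "\<pi> \<noteq> {}" using z by blast
  show "Min \<pi> = 0" using f z sub by (intro Min_eqI) auto
  show "t \<ge> 0" using f z mx Max_ge by (metis)
qed

lemma part_sub: "\<pi> \<in> partitions t \<Longrightarrow> \<pi> \<subseteq> {Min \<pi>..Max \<pi>}"
proof
  fix r assume p: "\<pi> \<in> partitions t" and r: "r \<in> \<pi>"
  show "r \<in> {Min \<pi>..Max \<pi>}" using Min_le[OF part_basic(1)[OF p] r] Max_ge[OF part_basic(1)[OF p] r] by simp
qed

lemma part_sub2: "\<pi> \<in> partitions t \<Longrightarrow> \<pi>' \<in> partitions t \<Longrightarrow> \<pi>' \<subseteq> {Min \<pi>..Max \<pi>}"
  using part_sub[of \<pi>' t] part_basic[of \<pi> t] part_basic[of \<pi>' t] by simp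

lemma part_single: "t \<ge> 0 \<Longrightarrow> {0, t} \<in> partitions t"
  unfolding partitions_def by (auto simp: max_def)

lemma part_union:
  assumes "\<pi> \<in> partitions t" "\<pi>' \<in> partitions t"
  shows "\<pi> \<union> \<pi>' \<in> partitions t"
proof -
  have "Max (\<pi> \<union> \<pi>') = max (Max \<pi>) (Max \<pi>')"
    using part_basic[OF assms(1)] part_basic[OF assms(2)] by (intro Max_Un) auto
  then have "Max (\<pi> \<union> \<pi>') = t" using part_basic[OF assms(1)] part_basic[OF assms(2)] by simp
  moreover have "\<pi> \<union> \<pi>' \<subseteq> {0..}" using part_basic(5)[OF assms(1)] part_basic(5)[OF assms(2)] by blast
  moreover have "finite (\<pi> \<union> \<pi>')" using part_basic(1)[OF assms(1)] part_basic(1)[OF assms(2)] by blast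
  moreover have "0 \<in> \<pi> \<union> \<pi>'" using part_basic(6)[OF assms(1)] by blast
  ultimately show ?thesis unfolding partitions_def by blast
qed

lemma Slub: "t \<ge> 0 \<Longrightarrow> is_lub (Sv t x) (Pset t x)"
proof -
  assume t: "t \<ge> 0"
  have ne: "Pset t x \<noteq> {}" using part_single[OF t] by blast
  have "\<forall>\<pi>\<in>partitions t. \<forall>x. J_part F Lam \<pi> x \<le> C t x" using JC t by blast
  then have "\<forall>a\<in>Pset t x. a \<le> C t x" by blast
  then have bd: "\<exists>u. \<forall>a\<in>Pset t x. a \<le> u" by blast
  obtain s where s: "is_lub s (Pset t x)" using dedekind[OF BL OC ne bd] by blast
  then show ?thesis unfolding Sv_def using lub_of_eq[OF s] by simp
qed

lemma Pdir: "updir (Pset t x)"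
  unfolding updir_def
proof (intro ballI)
  fix a b assume "a \<in> Pset t x" "b \<in> Pset t x"
  then obtain \<pi> \<pi>' where p: "a = G \<pi> x" "b = G \<pi>' x" "\<pi> \<in> partitions t" "\<pi>' \<in> partitions t" by blast
  have u: "\<pi> \<union> \<pi>' \<in> partitions t" using part_union[OF p(3,4)] .
  have "G \<pi> x \<le> G (\<pi> \<union> \<pi>') x"
    using part_basic[OF p(3)] part_basic[OF p(4)] part_sub2[OF p(3,4)] by (intro Gref_set) auto
  moreover have "G \<pi>' x \<le> G (\<pi>' \<union> \<pi>) x"
    using part_basic[OF p(3)] part_basic[OF p(4)] part_sub2[OF p(4,3)] by (intro Gref_set) auto
  moreover have "\<pi>' \<union> \<pi> = \<pi> \<union> \<pi>'" by (rule Un_commute)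
  moreover have "G (\<pi> \<union> \<pi>') x \<in> Pset t x" using u by blast
  ultimately show "\<exists>c\<in>Pset t x. a \<le> c \<and> b \<le> c" using p by auto
qed

lemma S_upper: "\<pi> \<in> partitions t \<Longrightarrow> G \<pi> x \<le> Sv t x"
  using Slub[OF part_basic(7)] unfolding is_lub_def by blast

lemma S_least: "t \<ge> 0 \<Longrightarrow> (\<And>\<pi>. \<pi> \<in> partitions t \<Longrightarrow> G \<pi> x \<le> u) \<Longrightarrow> Sv t x \<le> u"
  using Slub unfolding is_lub_def by blast

lemma S_ge_F: "l \<in> Lam \<Longrightarrow> t \<ge> 0 \<Longrightarrow> F l t x \<le> Sv t x"
proof -
  assume l: "l \<in> Lam" and t: "t \<ge> 0"
  have "F l t x \<le> J t x" using Jge[OF l t] .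
  also have "J t x = G {0, t} x"
  proof (cases "t = 0")
    case True then show ?thesis by (simp add: J0 Gsingle)
  next
    case False
    then have "G (insert 0 {t}) x = J (Min {t} - 0) (G {t} x)" using t by (intro Gins) auto
    then show ?thesis by (simp add: Gsingle)
  qed
  also have "\<dots> \<le> Sv t x" using S_upper[OF part_single[OF t]] .
  finally show ?thesis .
qed

lemma S_le_C: "t \<ge> 0 \<Longrightarrow> Sv t x \<le> C t x"
  using JC by (intro S_least) auto

lemma S0: "Sv 0 = id"
proof
  fix x
  have "Sv 0 x \<le> x"
  proof (rule S_least)
    fix \<pi> assume p: "\<pi> \<in> partitions 0"
    have "\<pi> = {0}"
    proof
      show "\<pi> \<subseteq> {0}"
      proof
        fix r assume r: "r \<in> \<pi>"
        have "Min \<pi> \<le> r" "r \<le> Max \<pi>" using Min_le[OF part_basic(1)[OF p] r] Max_ge[OF part_basic(1)[OF p] r] by auto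
        then show "r \<in> {0}" using part_basic[OF p] by simp
      qed
      show "{0} \<subseteq> \<pi>" using part_basic[OF p] by simp
    qed
    then show "G \<pi> x \<le> x" by (simp add: Gsingle)
  qed simp
  moreover have "x \<le> Sv 0 x" using S_upper[of "{0}" 0 x] by (simp add: Gsingle partitions_def)
  ultimately show "Sv 0 x = id x" by simp
qed

lemma Smono: "t \<ge> 0 \<Longrightarrow> x \<le> y \<Longrightarrow> Sv t x \<le> Sv t y"
proof -
  assume t: "t \<ge> 0" and xy: "x \<le> y"
  show ?thesis
  proof (rule S_least[OF t])
    fix \<pi> assume p: "\<pi> \<in> partitions t"
    have "G \<pi> x \<le> G \<pi> y" using part_basic[OF p] xy by (intro Gmono) auto
    also have "\<dots> \<le> Sv t y" by (rule S_upper[OF p])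
    finally show "G \<pi> x \<le> Sv t y" .
  qed
qed

lemma Sconv: "t \<ge> 0 \<Longrightarrow> 0 \<le> \<mu> \<Longrightarrow> \<mu> \<le> 1 \<Longrightarrow>
    Sv t (\<mu> *\<^sub>R x + (1 - \<mu>) *\<^sub>R y) \<le> \<mu> *\<^sub>R Sv t x + (1 - \<mu>) *\<^sub>R Sv t y"
proof -
  assume t: "t \<ge> 0" and m: "0 \<le> \<mu>" "\<mu> \<le> 1"
  show ?thesis
  proof (rule S_least[OF t])
    fix \<pi> assume p: "\<pi> \<in> partitions t"
    have "G \<pi> (\<mu> *\<^sub>R x + (1 - \<mu>) *\<^sub>R y) \<le> \<mu> *\<^sub>R G \<pi> x + (1 - \<mu>) *\<^sub>R G \<pi> y"
      using part_basic[OF p] m by (intro Gconv) auto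
    also have "\<dots> \<le> \<mu> *\<^sub>R Sv t x + (1 - \<mu>) *\<^sub>R Sv t y"
      using m S_upper[OF p] by (intro add_mono scaleR_left_mono) auto
    finally show "G \<pi> (\<mu> *\<^sub>R x + (1 - \<mu>) *\<^sub>R y) \<le> \<mu> *\<^sub>R Sv t x + (1 - \<mu>) *\<^sub>R Sv t y" .
  qed
qed

lemma Shom:
  assumes sub: "\<forall>l\<in>Lam. sublinear_sg (F l)" and t: "t \<ge> 0" and m: "\<mu> > 0"
  shows "Sv t (\<mu> *\<^sub>R x) = \<mu> *\<^sub>R Sv t x"
proof -
  have "Pset t (\<mu> *\<^sub>R x) = (\<lambda>a. \<mu> *\<^sub>R a) ` Pset t x"
  proof (rule set_eqI, rule iffI)
    fix y assume "y \<in> Pset t (\<mu> *\<^sub>R x)"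
    then obtain \<pi> where p: "\<pi> \<in> partitions t" "y = G \<pi> (\<mu> *\<^sub>R x)" by blast
    then have "y = \<mu> *\<^sub>R G \<pi> x" using Ghom[OF sub _ _ m] part_basic[OF p(1)] by simp
    moreover have "G \<pi> x \<in> Pset t x" using p by blast
    ultimately show "y \<in> (\<lambda>a. \<mu> *\<^sub>R a) ` Pset t x" by (rule image_eqI)
  next
    fix y assume "y \<in> (\<lambda>a. \<mu> *\<^sub>R a) ` Pset t x"
    then obtain \<pi> where p: "\<pi> \<in> partitions t" "y = \<mu> *\<^sub>R G \<pi> x" by blast
    then have "y = G \<pi> (\<mu> *\<^sub>R x)" using Ghom[OF sub _ _ m] part_basic[OF p(1)] by simp
    then show "y \<in> Pset t (\<mu> *\<^sub>R x)" using p by blast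
  qed
  then have "is_lub (\<mu> *\<^sub>R Sv t x) (Pset t (\<mu> *\<^sub>R x))"
    using lub_scale[OF Slub[OF t] m] by simp
  then show ?thesis using is_lub_unique[OF Slub[OF t]] by blast
qed

lemma Ssemi:
  assumes t: "t \<ge> 0" and s: "s \<ge> 0"
  shows "Sv (t + s) x = Sv t (Sv s x)"
proof (rule order.antisym)
  show "Sv (t + s) x \<le> Sv t (Sv s x)"
  proof (rule S_least)
    show "t + s \<ge> 0" using t s by simp
  next
    fix \<sigma> assume p: "\<sigma> \<in> partitions (t + s)"
    note pb = part_basic[OF p]
    define \<sigma>t where "\<sigma>t = insert t \<sigma>"
    define \<sigma>1 where "\<sigma>1 = {r\<in>\<sigma>t. r \<le> t}"
    define \<sigma>2 where "\<sigma>2 = {r\<in>\<sigma>t. t \<le> r}"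
    have fin: "finite \<sigma>t" "finite \<sigma>1" "finite \<sigma>2" using pb unfolding \<sigma>t_def \<sigma>1_def \<sigma>2_def by auto
    have tin: "t \<in> \<sigma>1" "t \<in> \<sigma>2" unfolding \<sigma>t_def \<sigma>1_def \<sigma>2_def by auto
    have un: "\<sigma>t = \<sigma>1 \<union> \<sigma>2" unfolding \<sigma>1_def \<sigma>2_def by auto
    have mx1: "Max \<sigma>1 = t" using fin tin unfolding \<sigma>1_def by (intro Max_eqI) auto
    have mn2: "Min \<sigma>2 = t" using fin tin unfolding \<sigma>2_def by (intro Min_eqI) auto
    have le_ts: "r \<le> t + s" if "r \<in> \<sigma>" for r using pb that by (metis Max_ge)
    have mx2: "Max \<sigma>2 = t + s"
    proof (rule Max_eqI)
      show "finite \<sigma>2" by (rule fin)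
    next
      fix r assume "r \<in> \<sigma>2" then show "r \<le> t + s" unfolding \<sigma>2_def \<sigma>t_def using le_ts s by auto
    next
      have "t + s \<in> \<sigma>" using pb Max_in by metis
      then show "t + s \<in> \<sigma>2" unfolding \<sigma>2_def \<sigma>t_def using s by auto
    qed
    have h1: "G \<sigma> x \<le> G \<sigma>t x" unfolding \<sigma>t_def using pb t s by (intro Gref) auto
    have h2: "G \<sigma>t x = G \<sigma>1 (G \<sigma>2 x)" unfolding un using fin tin mx1 mn2 by (intro Gcomp) auto
    have h3: "G \<sigma>2 x = G ((+) (- t) ` \<sigma>2) x" using fin tin by (intro Gshift[symmetric]) auto
    have h4: "G ((+) (- t) ` \<sigma>2) x \<le> Sv s x"
    proof (rule S_upper)
      have a1: "finite ((+) (- t) ` \<sigma>2)" using fin by simp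
      have a2: "(+) (- t) ` \<sigma>2 \<subseteq> {0..}" unfolding \<sigma>2_def by auto
      have a3: "0 \<in> (+) (- t) ` \<sigma>2" using tin(2) by (intro image_eqI[of _ _ t]) auto
      have a4: "Max ((+) (- t) ` \<sigma>2) = s"
      proof (rule Max_eqI)
        show "finite ((+) (- t) ` \<sigma>2)" by (rule a1)
      next
        fix y assume "y \<in> (+) (- t) ` \<sigma>2"
        then obtain r where r: "r \<in> \<sigma>2" "y = - t + r" by blast
        have "r \<le> t + s" using Max_ge[OF fin(3) r(1)] mx2 by simp
        then show "y \<le> s" using r by simp
      next
        have "t + s \<in> \<sigma>2" using Max_in[OF fin(3)] tin mx2 by auto
        then show "s \<in> (+) (- t) ` \<sigma>2" by (intro image_eqI[of _ _ "t + s"]) auto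
      qed
      show "(+) (- t) ` \<sigma>2 \<in> partitions s" unfolding partitions_def using a1 a2 a3 a4 by blast
    qed
    have h5: "G \<sigma>1 (G \<sigma>2 x) \<le> G \<sigma>1 (Sv s x)" using fin tin h3 h4 by (intro Gmono) auto
    have h6: "G \<sigma>1 (Sv s x) \<le> Sv t (Sv s x)"
    proof (rule S_upper)
      have b1: "\<sigma>1 \<subseteq> {0..}" using pb(5) t unfolding \<sigma>1_def \<sigma>t_def by auto
      have b2: "0 \<in> \<sigma>1" using pb(6) t unfolding \<sigma>1_def \<sigma>t_def by auto
      show "\<sigma>1 \<in> partitions t" unfolding partitions_def using fin(2) mx1 b1 b2 by blast
    qed
    have "G \<sigma> x \<le> G \<sigma>1 (G \<sigma>2 x)" using h1 h2 by simp
    also have "\<dots> \<le> G \<sigma>1 (Sv s x)" by (rule h5)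
    also have "\<dots> \<le> Sv t (Sv s x)" by (rule h6)
    finally show "G \<sigma> x \<le> Sv t (Sv s x)" .
  qed
next
  show "Sv t (Sv s x) \<le> Sv (t + s) x"
  proof (rule S_least[OF t])
    fix \<pi> assume p: "\<pi> \<in> partitions t"
    note pb = part_basic[OF p]
    have l: "is_lub (G \<pi> (Sv s x)) (G \<pi> ` Pset s x)"
      using pb Slub[OF s] Pdir part_single[OF s] by (intro Gcont) auto
    have "\<forall>b\<in>G \<pi> ` Pset s x. b \<le> Sv (t + s) x"
    proof
      fix b assume "b \<in> G \<pi> ` Pset s x"
      then obtain \<pi>' where p': "\<pi>' \<in> partitions s" "b = G \<pi> (G \<pi>' x)" by blast
      note pb' = part_basic[OF p'(1)]
      define \<sigma> where "\<sigma> = (+) t ` \<pi>'"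
      have fs: "finite \<sigma>" "\<sigma> \<noteq> {}" using pb' unfolding \<sigma>_def by auto
      have mn: "Min \<sigma> = t" using mono_Min_commute[of "(+) t" \<pi>'] pb' unfolding \<sigma>_def by (auto simp: mono_def)
      have mx: "Max \<sigma> = t + s" using mono_Max_commute[of "(+) t" \<pi>'] pb' unfolding \<sigma>_def by (auto simp: mono_def)
      have "b = G \<pi> (G \<sigma> x)" unfolding \<sigma>_def using p' pb' by (simp add: Gshift)
      also have "\<dots> = G (\<pi> \<union> \<sigma>) x" using pb fs mn by (intro Gcomp[symmetric]) auto
      also have "\<dots> \<le> Sv (t + s) x"
      proof (rule S_upper)
        have "Max (\<pi> \<union> \<sigma>) = max (Max \<pi>) (Max \<sigma>)" using pb fs by (intro Max_Un) auto
        then have "Max (\<pi> \<union> \<sigma>) = t + s" using pb mx s by simp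
        moreover have "\<sigma> \<subseteq> {0..}" using pb' t unfolding \<sigma>_def by auto
        ultimately show "\<pi> \<union> \<sigma> \<in> partitions (t + s)" using pb fs unfolding partitions_def by auto
      qed
      finally show "b \<le> Sv (t + s) x" .
    qed
    then show "G \<pi> (Sv s x) \<le> Sv (t + s) x" using l unfolding is_lub_def by blast
  qed
qed

end


context env2
begin

lemma Ssg: "semigroup Sv"
  unfolding semigroup_def
proof (intro conjI allI impI)
  fix t :: real assume t: "t \<ge> 0"
  show "bounded_op (Sv t)" unfolding bounded_op_def
  proof (intro allI impI)
    fix r :: real assume r: "r > 0"
    obtain l0 where l0: "l0 \<in> Lam" using nonempty by blast
    obtain M1 where M1: "\<forall>x. norm x \<le> r \<longrightarrow> norm (F l0 t x) \<le> M1"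
      using Fbdd[OF l0 t] r unfolding bounded_op_def by blast
    obtain M2 where M2: "\<forall>x. norm x \<le> r \<longrightarrow> norm (C t x) \<le> M2"
      using Cbd t r unfolding bounded_op_def by blast
    have "norm (Sv t x) \<le> M1 + (M2 + M1)" if x: "norm x \<le> r" for x
    proof -
      have a: "F l0 t x \<le> Sv t x" by (rule S_ge_F[OF l0 t])
      have b: "Sv t x \<le> C t x" by (rule S_le_C[OF t])
      have n1: "norm (Sv t x) \<le> norm (F l0 t x) + norm (Sv t x - F l0 t x)"
        using norm_triangle_ineq[of "F l0 t x" "Sv t x - F l0 t x"] by simp
      have n2: "norm (Sv t x - F l0 t x) \<le> norm (C t x - F l0 t x)" by (rule sandwich_norm[OF BL a b])
      have n3: "norm (C t x - F l0 t x) \<le> norm (C t x) + norm (F l0 t x)" by (rule norm_triangle_ineq4)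
      have "norm (Sv t x) \<le> norm (F l0 t x) + (norm (C t x) + norm (F l0 t x))" using n1 n2 n3 by linarith
      moreover have "norm (F l0 t x) \<le> M1" using M1 x by blast
      moreover have "norm (C t x) \<le> M2" using M2 x by blast
      ultimately show ?thesis by linarith
    qed
    then show "\<exists>M. \<forall>x. norm x \<le> r \<longrightarrow> norm (Sv t x) \<le> M" by blast
  qed
next
  show "Sv 0 = id" by (rule S0)
next
  fix t s :: real assume "t \<ge> 0" "s \<ge> 0"
  then show "Sv (t + s) = Sv t \<circ> Sv s" by (intro ext) (simp add: Ssemi)
qed

lemma Senv: "is_envelope F Lam Sv"
  unfolding is_envelope_def is_upper_bound_sg_def
proof (intro conjI allI impI ballI)
  show "semigroup Sv" by (rule Ssg)
next
  fix l assume "l \<in> Lam" then show "sg_le (F l) Sv" unfolding sg_le_def using S_ge_F by blast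
next
  fix T assume T: "semigroup T \<and> (\<forall>l\<in>Lam. sg_le (F l) T)"
  show "sg_le Sv T" unfolding sg_le_def
  proof (intro allI impI)
    fix t :: real and x assume t: "t \<ge> 0"
    show "Sv t x \<le> T t x"
    proof (rule S_least[OF t])
      fix \<pi> assume p: "\<pi> \<in> partitions t"
      have "G \<pi> x \<le> T (Max \<pi> - Min \<pi>) x" using T part_basic[OF p] by (intro GleT) auto
      then show "G \<pi> x \<le> T t x" using part_basic[OF p] by simp
    qed
  qed
qed

lemma SC0:
  assumes Cc: "\<forall>x. ((\<lambda>t. C t x) \<longlongrightarrow> x) (at_right 0)" and l0: "l0 \<in> Lam" and C0: "C0_semigroup (F l0)"
  shows "C0_semigroup Sv"
  unfolding C0_semigroup_def
proof (intro conjI allI)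
  show "semigroup Sv" by (rule Ssg)
next
  fix x
  have f1: "((\<lambda>t. C t x - x) \<longlongrightarrow> 0) (at_right 0)" using Cc by (intro LIM_zero) blast
  have f2: "((\<lambda>t. F l0 t x - x) \<longlongrightarrow> 0) (at_right 0)" using C0 unfolding C0_semigroup_def by (intro LIM_zero) blast
  have g: "((\<lambda>t. norm (C t x - x) + 2 * norm (F l0 t x - x)) \<longlongrightarrow> 0) (at_right 0)"
    using tendsto_add[OF tendsto_norm_zero[OF f1] tendsto_mult[OF tendsto_const tendsto_norm_zero[OF f2]]] by simp
  have ev: "eventually (\<lambda>t. norm (Sv t x - x) \<le> norm (C t x - x) + 2 * norm (F l0 t x - x)) (at_right 0)"
    using eventually_at_right_less[of "0::real"]
  proof (rule eventually_mono)
    fix t :: real assume "0 < t"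
    then have t: "t \<ge> 0" by simp
    have a: "F l0 t x \<le> Sv t x" by (rule S_ge_F[OF l0 t])
    have b: "Sv t x \<le> C t x" by (rule S_le_C[OF t])
    have n1: "norm (Sv t x - x) \<le> norm (Sv t x - F l0 t x) + norm (F l0 t x - x)"
      using norm_triangle_ineq[of "Sv t x - F l0 t x" "F l0 t x - x"] by simp
    have n2: "norm (Sv t x - F l0 t x) \<le> norm (C t x - F l0 t x)" by (rule sandwich_norm[OF BL a b])
    have n3: "norm (C t x - F l0 t x) \<le> norm (C t x - x) + norm (F l0 t x - x)"
      using norm_triangle_ineq4[of "C t x - x" "F l0 t x - x"] by simp
    show "norm (Sv t x - x) \<le> norm (C t x - x) + 2 * norm (F l0 t x - x)" using n1 n2 n3 by linarith
  qed
  have "((\<lambda>t. Sv t x - x) \<longlongrightarrow> 0) (at_right 0)" by (rule Lim_null_comparison[OF ev g])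
  then show "((\<lambda>t. Sv t x) \<longlongrightarrow> x) (at_right 0)" by (simp add: LIM_zero_iff)
qed

lemma main:
  "\<exists>S. is_envelope F Lam S \<and> semigroup S \<and> convex_sg S \<and> monotone_sg S \<and>
     (\<forall>t\<ge>0. \<forall>x. is_lub (S t x) {J_part F Lam \<pi> x | \<pi>. \<pi> \<in> partitions t}) \<and>
     (((\<forall>x. ((\<lambda>t. C t x) \<longlongrightarrow> x) (at_right 0)) \<and> (\<exists>l0\<in>Lam. C0_semigroup (F l0)))
        \<longrightarrow> C0_semigroup S) \<and>
     ((\<forall>l\<in>Lam. sublinear_sg (F l)) \<longrightarrow> sublinear_sg S)"
proof (rule exI[of _ Sv], intro conjI impI)
  show "is_envelope F Lam Sv" by (rule Senv)
  show "semigroup Sv" by (rule Ssg)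
  show "convex_sg Sv" unfolding convex_sg_def convex_op_def using Sconv by blast
  show "monotone_sg Sv" unfolding monotone_sg_def monotone_op_def using Smono by blast
  show "\<forall>t\<ge>0. \<forall>x. is_lub (Sv t x) (Pset t x)" using Slub by blast
next
  assume "(\<forall>x. ((\<lambda>t. C t x) \<longlongrightarrow> x) (at_right 0)) \<and> (\<exists>l0\<in>Lam. C0_semigroup (F l0))"
  then show "C0_semigroup Sv" using SC0 by blast
next
  assume sub: "\<forall>l\<in>Lam. sublinear_sg (F l)"
  show "sublinear_sg Sv" unfolding sublinear_sg_def sublinear_op_def pos_homogeneous_op_def convex_op_def
    using Sconv Shom[OF sub] by blast
qed

end

theorem theorem4p2:
  fixes F :: "'l \<Rightarrow> real \<Rightarrow> 'a::{banach, ordered_real_vector, lattice} \<Rightarrow> 'a"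
    and Lam :: "'l set"
    and C :: "real \<Rightarrow> 'a \<Rightarrow> 'a"
  assumes BL: "banach_lattice TYPE('a)"
    and OC: "order_continuous_norm TYPE('a)"
    and nonempty: "Lam \<noteq> {}"
    and sg: "\<forall>l\<in>Lam. semigroup (F l) \<and> convex_sg (F l) \<and> monotone_sg (F l)"
    and bdd: "\<forall>x. \<forall>t>0. \<exists>u. \<forall>l\<in>Lam. F l t x \<le> u"
    and Cbd: "\<forall>t\<ge>0. bounded_op (C t)"
    and JC: "\<forall>t\<ge>0. \<forall>\<pi>\<in>partitions t. \<forall>x. J_part F Lam \<pi> x \<le> C t x"
  shows "\<exists>S. is_envelope F Lam S \<and> semigroup S \<and> convex_sg S \<and> monotone_sg S \<and>
     (\<forall>t\<ge>0. \<forall>x. is_lub (S t x) {J_part F Lam \<pi> x | \<pi>. \<pi> \<in> partitions t}) \<and>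
     (((\<forall>x. ((\<lambda>t. C t x) \<longlongrightarrow> x) (at_right 0)) \<and> (\<exists>l0\<in>Lam. C0_semigroup (F l0)))
        \<longrightarrow> C0_semigroup S) \<and>
     ((\<forall>l\<in>Lam. sublinear_sg (F l)) \<longrightarrow> sublinear_sg S)"
proof -
  interpret env2 F Lam C
    by (unfold_locales) (fact BL OC nonempty sg bdd Cbd JC)+
  show ?thesis by (rule main)
qed

end
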